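(* For all integers $i,N,n$ with $0\le i\le N\le n$, $$\sum_{i_1,i_2}\binom{n-i_2}{N-i_2}\binom{n-i_1}{i_2-i}\binom{N-i}{i_1-i}(-1)^{i_1+i_2}=(-1)^{N-i},$$ where the sum is over all integers $i_1,i_2$.
   Context: Convention: the binomial coefficient $\binom{k}{l}$ is defined as the usual binomial coefficient when $k\ge0$, $l\ge0$ and $k\ge l$, and is $0$ otherwise. Because of this convention, the sum above has only finitely many nonzero terms. *)

theory Defs
  imports Main "HOL-Library.Groups_Big_Fun"
begin

definition ibinom :: "int \<Rightarrow> int \<Rightarrow> int" where
  "ibinom k l = (if 0 \<le> l \<and> l \<le> k then int (nat k choose nat l) else 0)"

definition negone_pow :: "int \<Rightarrow> int" where
  "negone_pow m = (if even m then 1 else -1)"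

end

theory Submission
  imports Defs
begin

definition FF :: "nat \<Rightarrow> nat \<Rightarrow> nat \<Rightarrow> int" where
  "FF M m b = (\<Sum>a\<le>M. (-1)^a * int (M choose a) * int ((m-a) choose b))"

lemma FF_rec: "FF (Suc M) m b = FF M m b - FF M (m-1) b"
proof -
  have A: "FF (Suc M) m b = int (m choose b) + (\<Sum>a\<le>M. (-1)^(Suc a) * int (Suc M choose Suc a) * int ((m - Suc a) choose b))"
    unfolding FF_def by (subst sum.atMost_Suc_shift) (simp del: sum.atMost_Suc)
  have B: "FF M m b = int (m choose b) + (\<Sum>a\<le>M. (-1)^(Suc a) * int (M choose Suc a) * int ((m - Suc a) choose b))"
  proof -
    have "FF M m b = (\<Sum>a\<le>Suc M. (-1)^a * int (M choose a) * int ((m-a) choose b))"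
      unfolding FF_def by (subst sum.atMost_Suc) simp
    also have "\<dots> = int (m choose b) + (\<Sum>a\<le>M. (-1)^(Suc a) * int (M choose Suc a) * int ((m - Suc a) choose b))"
      by (subst sum.atMost_Suc_shift) (simp del: sum.atMost_Suc)
    finally show ?thesis .
  qed
  have C: "FF M (m-1) b = (\<Sum>a\<le>M. (-1)^a * int (M choose a) * int ((m - Suc a) choose b))"
    unfolding FF_def by (rule sum.cong) simp_all
  have D: "(\<Sum>a\<le>M. (-1)^(Suc a) * int (Suc M choose Suc a) * int ((m - Suc a) choose b))
    = (\<Sum>a\<le>M. (-1)^(Suc a) * int (M choose Suc a) * int ((m - Suc a) choose b))
     - (\<Sum>a\<le>M. (-1)^a * int (M choose a) * int ((m - Suc a) choose b))"
    unfolding sum_subtractf[symmetric]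
    by (rule sum.cong) (simp_all add: algebra_simps del: sum.atMost_Suc)
  show ?thesis unfolding A B C D by simp
qed

lemma FF_val: "M \<le> m \<Longrightarrow> FF M m b = (if M \<le> b then int ((m-M) choose (b-M)) else 0)"
proof (induction M arbitrary: m b)
  case 0
  then show ?case by (simp add: FF_def)
next
  case (Suc M)
  have h1: "FF M m b = (if M \<le> b then int ((m-M) choose (b-M)) else 0)" using Suc by simp
  have h2: "FF M (m-1) b = (if M \<le> b then int ((m-1-M) choose (b-M)) else 0)" using Suc by simp
  have e: "m - M = Suc (m - Suc M)" "m - 1 - M = m - Suc M" using Suc.prems by simp_all
  show ?case
  proof (cases "Suc M \<le> b")
    case True
    then have "b - M = Suc (b - Suc M)" by simp
    then show ?thesis using True unfolding FF_rec h1 h2 e by simp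
  next
    case False
    then show ?thesis unfolding FF_rec h1 h2 e by (cases "b = M") auto
  qed
qed
lemma ibinom_nat: "ibinom (int p) (int q) = int (p choose q)"
  unfolding ibinom_def by (auto simp: binomial_eq_0)

lemma negone_pow_shift: "negone_pow ((i + int a) + (i + int b)) = (-1)^(a+b)"
proof -
  have "even ((i + int a) + (i + int b)) \<longleftrightarrow> even (a+b)"
    by (metis add.assoc add.left_commute even_add even_of_nat_iff of_nat_add)
  then show ?thesis unfolding negone_pow_def by simp
qed

lemma nat_main: assumes "M \<le> m"
  shows "(\<Sum>b\<le>M. \<Sum>a\<le>M. int ((m-b) choose (M-b)) * int ((m-a) choose b) * int (M choose a) * (-1)^(a+b))
     = (-1)^M"
proof -
  have "(\<Sum>b\<le>M. \<Sum>a\<le>M. int ((m-b) choose (M-b)) * int ((m-a) choose b) * int (M choose a) * (-1)^(a+b))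
     = (\<Sum>b\<le>M. int ((m-b) choose (M-b)) * (-1)^b * FF M m b)"
    unfolding FF_def sum_distrib_left
    by (intro sum.cong refl) (simp add: power_add algebra_simps)
  also have "\<dots> = (\<Sum>b\<le>M. if b = M then (-1)^M else 0)"
    by (intro sum.cong refl) (use assms in \<open>auto simp: FF_val\<close>)
  also have "\<dots> = (-1)^M" by simp
  finally show ?thesis .
qed

theorem mainTheorem2:
  fixes i N n :: int
  assumes "0 \<le> i" and "i \<le> N" and "N \<le> n"
  shows "Sum_any (\<lambda>(i1::int, i2::int).
            ibinom (n - i2) (N - i2) * ibinom (n - i1) (i2 - i) * ibinom (N - i) (i1 - i)
            * negone_pow (i1 + i2))
         = negone_pow (N - i)"
proof -
  define g where "g = (\<lambda>(i1::int, i2::int).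
            ibinom (n - i2) (N - i2) * ibinom (n - i1) (i2 - i) * ibinom (N - i) (i1 - i)
            * negone_pow (i1 + i2))"
  define M where "M = nat (N - i)"
  define m where "m = nat (n - i)"
  have MN: "N = i + int M" and mn: "n = i + int m" and Mm: "M \<le> m"
    using assms by (auto simp: M_def m_def)
  define h where "h = (\<lambda>(a::nat, b::nat). (i + int a, i + int b))"
  have supp: "{x. g x \<noteq> 0} \<subseteq> {i..N} \<times> {i..N}"
  proof
    fix x assume "x \<in> {x. g x \<noteq> 0}"
    then obtain i1 i2 where x: "x = (i1, i2)" and nz: "g (i1, i2) \<noteq> 0" by (cases x) auto
    from nz have "ibinom (n - i2) (N - i2) \<noteq> 0" "ibinom (n - i1) (i2 - i) \<noteq> 0"
      "ibinom (N - i) (i1 - i) \<noteq> 0" by (auto simp: g_def)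
    then show "x \<in> {i..N} \<times> {i..N}" unfolding x ibinom_def by (auto split: if_splits)
  qed
  have img: "{i..N} \<times> {i..N} = h ` ({..M} \<times> {..M})"
  proof
    show "{i..N} \<times> {i..N} \<subseteq> h ` ({..M} \<times> {..M})"
    proof
      fix x assume "x \<in> {i..N} \<times> {i..N}"
      then obtain i1 i2 where x: "x = (i1, i2)" "i \<le> i1" "i1 \<le> N" "i \<le> i2" "i2 \<le> N" by auto
      have "x = h (nat (i1 - i), nat (i2 - i))" using x by (simp add: h_def)
      moreover have "(nat (i1 - i), nat (i2 - i)) \<in> {..M} \<times> {..M}" using x MN by auto
      ultimately show "x \<in> h ` ({..M} \<times> {..M})" by blast
    qed
  next
    show "h ` ({..M} \<times> {..M}) \<subseteq> {i..N} \<times> {i..N}" using MN by (auto simp: h_def)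
  qed
  have inj: "inj_on h ({..M} \<times> {..M})" unfolding h_def inj_on_def by auto
  have "Sum_any g = sum g ({i..N} \<times> {i..N})"
    by (rule Sum_any.expand_superset[OF _ supp]) simp
  also have "\<dots> = sum (g \<circ> h) ({..M} \<times> {..M})"
    unfolding img by (rule sum.reindex[OF inj])
  also have "\<dots> = (\<Sum>a\<le>M. \<Sum>b\<le>M. (g \<circ> h) (a, b))"
    by (simp add: sum.cartesian_product split_def)
  also have "\<dots> = (\<Sum>b\<le>M. \<Sum>a\<le>M. (g \<circ> h) (a, b))"
    by (rule sum.swap)
  also have "\<dots> = (\<Sum>b\<le>M. \<Sum>a\<le>M. int ((m-b) choose (M-b)) * int ((m-a) choose b) * int (M choose a) * (-1)^(a+b))"
  proof (intro sum.cong refl)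
    fix a b assume a: "a \<in> {..M}" and b: "b \<in> {..M}"
    have e1: "n - (i + int b) = int (m - b)" "N - (i + int b) = int (M - b)"
      "n - (i + int a) = int (m - a)" "i + int b - i = int b" "N - i = int M" "i + int a - i = int a"
      using a b Mm MN mn by auto
    show "(g \<circ> h) (a, b) = int ((m-b) choose (M-b)) * int ((m-a) choose b) * int (M choose a) * (-1)^(a+b)"
      unfolding g_def h_def comp_def by (simp only: case_prod_conv e1 ibinom_nat negone_pow_shift)
  qed
  also have "\<dots> = (-1)^M" by (rule nat_main[OF Mm])
  also have "\<dots> = negone_pow (N - i)"
    unfolding negone_pow_def MN by simp
  finally show ?thesis unfolding g_def .
qed

end
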